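(* Let $M$ be a duplicial module in a pre-additive category, and define the Connes operator $B_n=\sum_{i=0}^n d_n\kappa_n^i:M_n\to M_{n+1}$ for $n\ge0$ (and $B_{-1}=0$). Then for all $n\ge0$, $$b_{n+1}B_n+B_{n-1}b_n=1-\pi_n\qquad\text{and}\qquad B_{n+1}B_n=0 .$$
   Context: Let $\mathcal A$ be a pre-additive category. Let $\Lambda_+$ be the category with objects $[n]$, $n\ge0$, where $\Lambda_+([m],[n])$ is the set of weakly monotone $f:\mathbb Z\to\mathbb Z$ with $f(j+m+1)=f(j)+n+1$ for all $j$ and $f(0)\ge0$. Define $\varepsilon^n_i:[n-1]\to[n]$ ($n\ge1$, $0\le i\le n$) by $\varepsilon^n_i(j)=j$ for $0\le j<i$, $j+1$ for $i\le j\le n-1$, and $\eta^n_i:[n+1]\to[n]$ ($0\le i\le n+1$) by $\eta^n_i(j)=j$ for $0\le j\le i$, $j-1$ for $i<j\le n+1$. A duplicial module is a functor $M:\Lambda_+^{op}\to\mathcal A$; $M_n=M([n])$, $\partial_{n,i}=M(\varepsilon^n_i):M_n\to M_{n-1}$, $s_{n,i}=M(\eta^n_i):M_n\to M_{n+1}$. Convention $M_{-1}=0$, maps into/out of it zero. Define $b_n=\sum_{i=0}^n(-1)^i\partial_{n,i}$ ($b_0=0$), $d_n=\sum_{i=0}^{n+1}(-1)^is_{n,i}$, the Karoubi operator $\kappa_n=(-1)^n(\partial_{n+1,0}s_{n,n+1}-s_{n-1,n}\partial_{n,0})$ (so $\kappa_0=\partial_{1,0}s_{0,1}$), and the Dwyer–Kan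 operator $\pi_n=(-1)^n\partial_{n+1,0}\kappa_{n+1}^n s_{n,n+1}$. *)

theory Defs
  imports Main
begin

record ('o, 'm) pacat =
  pa_hom  :: "'o \<Rightarrow> 'o \<Rightarrow> 'm set"
  pa_comp :: "'m \<Rightarrow> 'm \<Rightarrow> 'm"         (* pa_comp g f = g \<circ> f *)
  pa_id   :: "'o \<Rightarrow> 'm"
  pa_add  :: "'m \<Rightarrow> 'm \<Rightarrow> 'm"
  pa_neg  :: "'m \<Rightarrow> 'm"
  pa_zero :: "'o \<Rightarrow> 'o \<Rightarrow> 'm"

definition preadditive :: "('o, 'm) pacat \<Rightarrow> bool" where
  "preadditive C \<longleftrightarrow>
     (\<forall>a b c f g. f \<in> pa_hom C a b \<longrightarrow> g \<in> pa_hom C b c \<longrightarrow> pa_comp C g f \<in> pa_hom C a c) \<and>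
     (\<forall>a b c d f g h. f \<in> pa_hom C a b \<longrightarrow> g \<in> pa_hom C b c \<longrightarrow> h \<in> pa_hom C c d \<longrightarrow>
        pa_comp C h (pa_comp C g f) = pa_comp C (pa_comp C h g) f) \<and>
     (\<forall>a. pa_id C a \<in> pa_hom C a a) \<and>
     (\<forall>a b f. f \<in> pa_hom C a b \<longrightarrow> pa_comp C (pa_id C b) f = f \<and> pa_comp C f (pa_id C a) = f) \<and>
     (\<forall>a b f g. f \<in> pa_hom C a b \<longrightarrow> g \<in> pa_hom C a b \<longrightarrow> pa_add C f g \<in> pa_hom C a b) \<and>
     (\<forall>a b f. f \<in> pa_hom C a b \<longrightarrow> pa_neg C f \<in> pa_hom C a b) \<and>
     (\<forall>a b. pa_zero C a b \<in> pa_hom C a b) \<and>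
     (\<forall>a b f g h. f \<in> pa_hom C a b \<longrightarrow> g \<in> pa_hom C a b \<longrightarrow> h \<in> pa_hom C a b \<longrightarrow>
        pa_add C (pa_add C f g) h = pa_add C f (pa_add C g h)) \<and>
     (\<forall>a b f g. f \<in> pa_hom C a b \<longrightarrow> g \<in> pa_hom C a b \<longrightarrow> pa_add C f g = pa_add C g f) \<and>
     (\<forall>a b f. f \<in> pa_hom C a b \<longrightarrow> pa_add C (pa_zero C a b) f = f) \<and>
     (\<forall>a b f. f \<in> pa_hom C a b \<longrightarrow> pa_add C (pa_neg C f) f = pa_zero C a b) \<and>
     (\<forall>a b c f g g'. f \<in> pa_hom C a b \<longrightarrow> g \<in> pa_hom C b c \<longrightarrow> g' \<in> pa_hom C b c \<longrightarrow>
        pa_comp C (pa_add C g g') f = pa_add C (pa_comp C g f) (pa_comp C g' f)) \<and>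
     (\<forall>a b c f f' g. f \<in> pa_hom C a b \<longrightarrow> f' \<in> pa_hom C a b \<longrightarrow> g \<in> pa_hom C b c \<longrightarrow>
        pa_comp C g (pa_add C f f') = pa_add C (pa_comp C g f) (pa_comp C g f'))"

definition lam :: "nat \<Rightarrow> nat \<Rightarrow> (int \<Rightarrow> int) set" where
  "lam m n = {f. mono f \<and> (\<forall>j. f (j + int m + 1) = f j + int n + 1) \<and> f 0 \<ge> 0}"

(* \<epsilon>^n_i : [n-1] \<rightarrow> [n], extended periodically to \<int> *)
definition eps :: "nat \<Rightarrow> nat \<Rightarrow> int \<Rightarrow> int" where
  "eps n i j = (let q = j div int n; r = j mod int n in
      q * (int n + 1) + (if r < int i then r else r + 1))"

(* \<eta>^n_i : [n+1] \<rightarrow> [n], extended periodically to \<int> *)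
definition eta :: "nat \<Rightarrow> nat \<Rightarrow> int \<Rightarrow> int" where
  "eta n i j = (let q = j div (int n + 2); r = j mod (int n + 2) in
      q * (int n + 1) + (if r \<le> int i then r else r - 1))"

definition duplicial :: "('o, 'm) pacat \<Rightarrow> (nat \<Rightarrow> 'o) \<Rightarrow> (nat \<Rightarrow> nat \<Rightarrow> (int \<Rightarrow> int) \<Rightarrow> 'm) \<Rightarrow> bool" where
  "duplicial C Mo Mf \<longleftrightarrow>
     (\<forall>m n f. f \<in> lam m n \<longrightarrow> Mf m n f \<in> pa_hom C (Mo n) (Mo m)) \<and>
     (\<forall>m. Mf m m id = pa_id C (Mo m)) \<and>
     (\<forall>l m n f g. f \<in> lam l m \<longrightarrow> g \<in> lam m n \<longrightarrow>
        Mf l n (g \<circ> f) = pa_comp C (Mf l m f) (Mf m n g))"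

definition sgnm :: "('o, 'm) pacat \<Rightarrow> nat \<Rightarrow> 'm \<Rightarrow> 'm" where
  "sgnm C k x = (if even k then x else pa_neg C x)"

fun ssum :: "('o, 'm) pacat \<Rightarrow> (nat \<Rightarrow> 'm) \<Rightarrow> nat \<Rightarrow> 'm" where
  "ssum C f 0 = f 0"
| "ssum C f (Suc k) = pa_add C (ssum C f k) (sgnm C (Suc k) (f (Suc k)))"

fun psum :: "('o, 'm) pacat \<Rightarrow> (nat \<Rightarrow> 'm) \<Rightarrow> nat \<Rightarrow> 'm" where
  "psum C f 0 = f 0"
| "psum C f (Suc k) = pa_add C (psum C f k) (f (Suc k))"

(* \<partial>_{n,i} = M(\<epsilon>^n_i) : M_n \<rightarrow> M_{n-1}  (n \<ge> 1) *)
definition face :: "(nat \<Rightarrow> nat \<Rightarrow> (int \<Rightarrow> int) \<Rightarrow> 'm) \<Rightarrow> nat \<Rightarrow> nat \<Rightarrow> 'm" where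
  "face Mf n i = Mf (n - 1) n (eps n i)"

definition degen :: "(nat \<Rightarrow> nat \<Rightarrow> (int \<Rightarrow> int) \<Rightarrow> 'm) \<Rightarrow> nat \<Rightarrow> nat \<Rightarrow> 'm" where
  "degen Mf n i = Mf (n + 1) n (eta n i)"

definition bop :: "('o, 'm) pacat \<Rightarrow> (nat \<Rightarrow> nat \<Rightarrow> (int \<Rightarrow> int) \<Rightarrow> 'm) \<Rightarrow> nat \<Rightarrow> 'm" where
  "bop C Mf n = ssum C (face Mf n) n"

definition dop :: "('o, 'm) pacat \<Rightarrow> (nat \<Rightarrow> nat \<Rightarrow> (int \<Rightarrow> int) \<Rightarrow> 'm) \<Rightarrow> nat \<Rightarrow> 'm" where
  "dop C Mf n = ssum C (degen Mf n) (n + 1)"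

definition kappa :: "('o, 'm) pacat \<Rightarrow> (nat \<Rightarrow> nat \<Rightarrow> (int \<Rightarrow> int) \<Rightarrow> 'm) \<Rightarrow> nat \<Rightarrow> 'm" where
  "kappa C Mf n =
     (if n = 0 then pa_comp C (face Mf 1 0) (degen Mf 0 1)
      else sgnm C n (pa_add C (pa_comp C (face Mf (n + 1) 0) (degen Mf n (n + 1)))
                              (pa_neg C (pa_comp C (degen Mf (n - 1) n) (face Mf n 0)))))"

fun kpow :: "('o, 'm) pacat \<Rightarrow> (nat \<Rightarrow> 'o) \<Rightarrow> (nat \<Rightarrow> nat \<Rightarrow> (int \<Rightarrow> int) \<Rightarrow> 'm) \<Rightarrow> nat \<Rightarrow> nat \<Rightarrow> 'm" where
  "kpow C Mo Mf n 0 = pa_id C (Mo n)"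
| "kpow C Mo Mf n (Suc k) = pa_comp C (kappa C Mf n) (kpow C Mo Mf n k)"

definition piop :: "('o, 'm) pacat \<Rightarrow> (nat \<Rightarrow> 'o) \<Rightarrow> (nat \<Rightarrow> nat \<Rightarrow> (int \<Rightarrow> int) \<Rightarrow> 'm) \<Rightarrow> nat \<Rightarrow> 'm" where
  "piop C Mo Mf n = sgnm C n (pa_comp C (face Mf (n + 1) 0)
                      (pa_comp C (kpow C Mo Mf (n + 1) n) (degen Mf n (n + 1))))"

definition connesB :: "('o, 'm) pacat \<Rightarrow> (nat \<Rightarrow> 'o) \<Rightarrow> (nat \<Rightarrow> nat \<Rightarrow> (int \<Rightarrow> int) \<Rightarrow> 'm) \<Rightarrow> nat \<Rightarrow> 'm" where
  "connesB C Mo Mf n = psum C (\<lambda>i. pa_comp C (dop C Mf n) (kpow C Mo Mf n i)) n"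

end

theory Submission
  imports Defs "HOL-Library.Poly_Mapping" "HOL-Algebra.FiniteProduct"
begin

definition per :: "int \<Rightarrow> int \<Rightarrow> (int \<Rightarrow> int) \<Rightarrow> int \<Rightarrow> int" where
  "per p p' g x = (x div p) * p' + g (x mod p)"

lemma per_shift: "p > 0 \<Longrightarrow> per p p' g (q * p + y) = q * p' + per p p' g y"
  unfolding per_def by (simp add: algebra_simps)

lemma per_eval: "0 \<le> y \<Longrightarrow> y \<le> p \<Longrightarrow> p > 0 \<Longrightarrow> per p p' g y = (if y = p then p' + g 0 else g y)"
  unfolding per_def by auto

lemma comp_red: "p' > 0 \<Longrightarrow> p2 = p' \<Longrightarrow> (per p2 p'' h \<circ> per p p' g) x = (x div p) * p'' + per p' p'' h (g (x mod p))"
  using per_shift[of p' p'' h "x div p" "g (x mod p)"] by (simp add: per_def)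

lemma eps_per: "eps n i = per (int n) (int n + 1) (\<lambda>r. if r < int i then r else r + 1)"
  unfolding eps_def per_def by (auto simp: Let_def intro!: ext)

lemma eta_per: "eta n i = per (int n + 2) (int n + 1) (\<lambda>r. if r \<le> int i then r else r - 1)"
  unfolding eta_def per_def by (auto simp: Let_def intro!: ext)

lemma comp_eq:
  assumes "p > 0" "p' > 0" "q' > 0" "p2 = p'" "q2 = q'" "p3 = p''" "p4 = p''" "pp = p"
    and "\<forall>r. 0 \<le> r \<and> r < p \<longrightarrow> per p' p'' h (g r) = per q' p'' k (f r)"
  shows "per p2 p3 h \<circ> per p p' g = per q2 p4 k \<circ> per pp q' f"
proof
  fix x
  have "0 \<le> x mod p" "x mod p < p" using assms(1) by auto
  then show "(per p2 p3 h \<circ> per p p' g) x = (per q2 p4 k \<circ> per pp q' f) x"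
    using assms comp_red[of p' p' p'' h p g x] comp_red[of q' q' p'' k p f x] by auto
qed

lemma E1: "1 \<le> n \<Longrightarrow> i < j \<Longrightarrow> j \<le> n + 1 \<Longrightarrow>
  eps (n+1) j \<circ> eps n i = eps (n+1) i \<circ> eps n (j - 1)"
  unfolding eps_per
  by (rule comp_eq) (auto simp: per_eval)

lemma E2a: "1 \<le> n \<Longrightarrow> i < j \<Longrightarrow> j \<le> n + 1 \<Longrightarrow> \<not> (i = 0 \<and> j = n + 1) \<Longrightarrow>
  eta n j \<circ> eps (n+1) i = eps n i \<circ> eta (n - 1) (j - 1)"
  unfolding eps_per eta_per
  by (rule comp_eq) (auto simp: per_eval)

lemma E2b: "i = j \<or> (i = j + 1 \<and> j \<le> n) \<Longrightarrow> j \<le> n + 1 \<Longrightarrow>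
  eta n j \<circ> eps (n+1) i = id"
proof -
  assume a: "i = j \<or> (i = j + 1 \<and> j \<le> n)" "j \<le> n + 1"
  have "eta n j \<circ> eps (n+1) i = per (int n + 1) (int n + 1) (\<lambda>r. r) \<circ> per (int n + 1) (int n + 1) (\<lambda>r. r)"
    unfolding eps_per eta_per using a
    by (intro comp_eq) (auto simp: per_eval)
  also have "\<dots> = id"
    by (auto simp: per_def div_mult_mod_eq intro!: ext)
  finally show ?thesis .
qed

lemma E2c: "1 \<le> n \<Longrightarrow> j + 1 < i \<Longrightarrow> i \<le> n + 1 \<Longrightarrow>
  eta n j \<circ> eps (n+1) i = eps n (i - 1) \<circ> eta (n - 1) j"
  unfolding eps_per eta_per
  by (rule comp_eq) (auto simp: per_eval)

lemma E3: "i \<le> j \<Longrightarrow> j \<le> n + 1 \<Longrightarrow>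
  eta n j \<circ> eta (n+1) i = eta n i \<circ> eta (n+1) (j + 1)"
  unfolding eta_per
  by (rule comp_eq) (auto simp: per_eval)

lemma mono_int_step: fixes f :: "int \<Rightarrow> int"
  assumes "\<And>x. f x \<le> f (x + 1)" shows "mono f"
proof (rule monoI)
  fix x y :: int assume "x \<le> y"
  then show "f x \<le> f y"
  proof (induction y rule: int_ge_induct)
    case base then show ?case by simp
  next
    case (step i) then show ?case using assms[of i] by linarith
  qed
qed

lemma per_lam:
  assumes p: "p = int m + 1" and p': "p' = int n + 1"
    and g: "\<And>r. 0 \<le> r \<Longrightarrow> r + 1 < p \<Longrightarrow> g r \<le> g (r + 1)"
    and top: "g (p - 1) \<le> p' + g 0" and g0: "0 \<le> g 0"
  shows "per p p' g \<in> lam m n"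
proof -
  have pp: "p > 0" using p by simp
  have "mono (per p p' g)"
  proof (rule mono_int_step)
    fix x
    define q where "q = x div p"
    define r where "r = x mod p"
    have x: "x = q * p + r" unfolding q_def r_def by simp
    have r: "0 \<le> r" "r < p" unfolding r_def using pp by auto
    have "per p p' g x = q * p' + per p p' g r" using x per_shift[OF pp] by simp
    moreover have "per p p' g (x + 1) = q * p' + per p p' g (r + 1)"
      using x per_shift[OF pp, of p' g q "r + 1"] by (simp add: algebra_simps)
    moreover have "per p p' g r \<le> per p p' g (r + 1)"
    proof (cases "r + 1 < p")
      case True then show ?thesis using r g[of r] by (simp add: per_eval)
    next
      case False
      then have "r = p - 1" using r by simp
      then show ?thesis using r pp top by (simp add: per_eval)
    qed
    ultimately show "per p p' g x \<le> per p p' g (x + 1)" by simp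
  qed
  moreover have "\<forall>j. per p p' g (j + int m + 1) = per p p' g j + int n + 1"
  proof
    fix j
    have "per p p' g (1 * p + j) = 1 * p' + per p p' g j" by (rule per_shift[OF pp])
    then show "per p p' g (j + int m + 1) = per p p' g j + int n + 1"
      using p p' by (simp add: algebra_simps)
  qed
  moreover have "per p p' g 0 \<ge> 0" using pp g0 by (simp add: per_eval)
  ultimately show ?thesis unfolding lam_def by simp
qed

lemma eps_lam: "1 \<le> n \<Longrightarrow> i \<le> n \<Longrightarrow> eps n i \<in> lam (n - 1) n"
  unfolding eps_per by (rule per_lam) auto

lemma eta_lam: "i \<le> n + 1 \<Longrightarrow> eta n i \<in> lam (n + 1) n"
  unfolding eta_per by (rule per_lam) auto

lemma lam_comp: assumes "f \<in> lam l m" "g \<in> lam m n" shows "g \<circ> f \<in> lam l n"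
proof -
  have f: "mono f" "\<And>j. f (j + int l + 1) = f j + int m + 1" "0 \<le> f 0"
    using assms(1) unfolding lam_def by auto
  have g: "mono g" "\<And>j. g (j + int m + 1) = g j + int n + 1" "0 \<le> g 0"
    using assms(2) unfolding lam_def by auto
  have "mono (g \<circ> f)" using f g unfolding mono_def by simp
  moreover have "0 \<le> g (f 0)" using f g by (meson monoD order_trans)
  ultimately show ?thesis unfolding lam_def using f g by simp
qed

lemma id_lam: "id \<in> lam m m"
  unfolding lam_def by (simp add: mono_def)

typedef lm = "UNIV :: (int \<Rightarrow> int) set" by simp

instantiation lm :: monoid_add
begin
definition zero_lm :: lm where "zero_lm = Abs_lm id"
definition plus_lm :: "lm \<Rightarrow> lm \<Rightarrow> lm" where "plus_lm a b = Abs_lm (Rep_lm b \<circ> Rep_lm a)"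
instance
  by standard (auto simp: zero_lm_def plus_lm_def Abs_lm_inverse Rep_lm_inverse comp_assoc)
end

type_synonym R = "lm \<Rightarrow>\<^sub>0 int"

definition E :: "(int \<Rightarrow> int) \<Rightarrow> R" where "E f = Poly_Mapping.single (Abs_lm f) 1"

lemma E_mult: "E f * E g = E (g \<circ> f)"
  by (simp add: E_def mult_single plus_lm_def Abs_lm_inverse)

lemma E_id: "E id = 1"
  by (simp add: E_def zero_lm_def flip: single_one)

definition D :: "nat \<Rightarrow> nat \<Rightarrow> R" where "D n i = E (eps n i)"
definition S :: "nat \<Rightarrow> nat \<Rightarrow> R" where "S n i = E (eta n i)"

lemma R1: "1 \<le> n \<Longrightarrow> i < j \<Longrightarrow> j \<le> n + 1 \<Longrightarrow> D n i * D (n+1) j = D n (j - 1) * D (n+1) i"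
  unfolding D_def E_mult using E1 by simp

lemma R2a: "1 \<le> n \<Longrightarrow> i < j \<Longrightarrow> j \<le> n + 1 \<Longrightarrow> \<not> (i = 0 \<and> j = n + 1) \<Longrightarrow>
  D (n+1) i * S n j = S (n - 1) (j - 1) * D n i"
  unfolding D_def S_def E_mult using E2a by simp

lemma R2b: "i = j \<or> (i = j + 1 \<and> j \<le> n) \<Longrightarrow> j \<le> n + 1 \<Longrightarrow> D (n+1) i * S n j = 1"
  unfolding D_def S_def E_mult using E2b E_id by simp

lemma R2c: "1 \<le> n \<Longrightarrow> j + 1 < i \<Longrightarrow> i \<le> n + 1 \<Longrightarrow>
  D (n+1) i * S n j = S (n - 1) j * D n (i - 1)"
  unfolding D_def S_def E_mult using E2c by simp

lemma R3: "i \<le> j \<Longrightarrow> j \<le> n + 1 \<Longrightarrow> S (n+1) i * S n j = S (n+1) (j + 1) * S n i"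
  unfolding S_def E_mult using E3 by simp

definition sg :: "nat \<Rightarrow> R" where "sg i = (-1) ^ i"

lemma sg_0[simp]: "sg 0 = 1" by (simp add: sg_def)
lemma sg_Suc: "sg (Suc i) = - sg i" by (simp add: sg_def)
lemma sg_add: "sg (i + j) = sg i * sg j" by (simp add: sg_def power_add)
lemma sg_comm: "sg i * x = x * sg i"
  by (induction i) (simp_all add: sg_Suc)
lemma sg_sq: "sg i * sg i = 1"
  by (simp add: sg_def flip: power_add)

lemma prod_sums:
  "(\<Sum>i\<in>I. sg i * X i) * (\<Sum>j\<in>J. sg j * Y j) = (\<Sum>p\<in>I \<times> J. sg (fst p + snd p) * (X (fst p) * Y (snd p)))"
proof -
  have "(\<Sum>i\<in>I. sg i * X i) * (\<Sum>j\<in>J. sg j * Y j) = (\<Sum>i\<in>I. \<Sum>j\<in>J. sg i * X i * (sg j * Y j))"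
    by (subst sum_distrib_right) (simp add: sum_distrib_left)
  also have "\<dots> = (\<Sum>i\<in>I. \<Sum>j\<in>J. sg (i + j) * (X i * Y j))"
    by (intro sum.cong refl) (simp add: sg_add mult.assoc, metis mult.assoc sg_comm)
  also have "\<dots> = (\<Sum>p\<in>I \<times> J. sg (fst p + snd p) * (X (fst p) * Y (snd p)))"
    by (simp add: sum.cartesian_product case_prod_beta)
  finally show ?thesis .
qed

lemma sum_cancel:
  fixes f :: "'a \<Rightarrow> 'b::ab_group_add"
  assumes fin: "finite A" and LA: "L \<subseteq> A" and BA: "B \<subseteq> A" and BL: "B \<inter> L = {}"
    and phi: "\<And>a. a \<in> B \<Longrightarrow> \<phi> a \<in> A - B - L" and psi: "\<And>b. b \<in> A - B - L \<Longrightarrow> \<psi> b \<in> B"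
    and pp: "\<And>a. a \<in> B \<Longrightarrow> \<psi> (\<phi> a) = a" and qq: "\<And>b. b \<in> A - B - L \<Longrightarrow> \<phi> (\<psi> b) = b"
    and ff: "\<And>a. a \<in> B \<Longrightarrow> f (\<phi> a) = - f a"
  shows "sum f A = sum f L"
proof -
  have ff2: "- f (\<psi> b) = f b" if "b \<in> A - B - L" for b
    using ff[OF psi[OF that]] qq[OF that] by simp
  have A: "A = (B \<union> (A - B - L)) \<union> L" using LA BA by blast
  have fB: "finite B" "finite L" "finite (A - B - L)" using fin LA BA finite_subset by auto
  have "sum f A = sum f B + sum f (A - B - L) + sum f L"
    apply (subst A)
    apply (subst sum.union_disjoint)
    using fB BL apply auto[3]
    apply (subst sum.union_disjoint)
    using fB BL apply auto
    done
  moreover have "sum f (A - B - L) = sum (\<lambda>a. - f a) B"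
    by (rule sum.reindex_bij_witness[of _ \<phi> \<psi>]) (use phi psi pp qq ff2 in auto)
  ultimately show ?thesis by (simp add: sum_negf)
qed

definition bR :: "nat \<Rightarrow> R" where "bR n = (\<Sum>i\<le>n. sg i * D n i)"
definition dR :: "nat \<Rightarrow> R" where "dR n = (\<Sum>j\<le>n+1. sg j * S n j)"
definition d'R :: "nat \<Rightarrow> R" where "d'R n = (\<Sum>j\<le>n. sg j * S n j)"
definition tR :: "nat \<Rightarrow> R" where "tR n = D (n+1) 0 * S n (n+1)"
definition kR :: "nat \<Rightarrow> R" where
  "kR n = (if n = 0 then tR 0 else sg n * (tR n - S (n-1) n * D n 0))"

lemma bb: assumes "1 \<le> n" shows "bR n * bR (n+1) = 0"
proof -
  let ?f = "\<lambda>p. sg (fst p + snd p) * (D n (fst p) * D (n+1) (snd p))"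
  have "bR n * bR (n+1) = (\<Sum>p\<in>{..n} \<times> {..n+1}. ?f p)"
    unfolding bR_def by (rule prod_sums)
  also have "\<dots> = sum ?f {}"
  proof (rule sum_cancel[where B = "{p \<in> {..n} \<times> {..n+1}. fst p < snd p}"
        and \<phi> = "\<lambda>p. (snd p - 1, fst p)" and \<psi> = "\<lambda>p. (snd p, fst p + 1)"])
    fix a assume a: "a \<in> {p \<in> {..n} \<times> {..n+1}. fst p < snd p}"
    then obtain i j where ij: "a = (i, j)" "i < j" "j \<le> n + 1" by auto
    then obtain j' where j': "j = Suc j'" by (cases j) auto
    show "?f ((\<lambda>p. (snd p - 1, fst p)) a) = - ?f a"
      using R1[OF assms ij(2,3)] ij j' by (simp add: sg_Suc add.commute)
  qed auto
  finally show ?thesis by simp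
qed

lemma dd: "dR (n+1) * dR n = 0"
proof -
  let ?f = "\<lambda>p. sg (fst p + snd p) * (S (n+1) (fst p) * S n (snd p))"
  have "dR (n+1) * dR n = (\<Sum>p\<in>{..n+1+1} \<times> {..n+1}. ?f p)"
    unfolding dR_def by (rule prod_sums)
  also have "\<dots> = sum ?f {}"
  proof (rule sum_cancel[where B = "{p \<in> {..n+1+1} \<times> {..n+1}. fst p \<le> snd p}"
        and \<phi> = "\<lambda>p. (snd p + 1, fst p)" and \<psi> = "\<lambda>p. (snd p, fst p - 1)"])
    fix a assume a: "a \<in> {p \<in> {..n+1+1} \<times> {..n+1}. fst p \<le> snd p}"
    then obtain i j where ij: "a = (i, j)" "i \<le> j" "j \<le> n + 1" by auto
    show "?f ((\<lambda>p. (snd p + 1, fst p)) a) = - ?f a"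
      using R3[OF ij(2,3)] ij by (simp add: sg_Suc add.commute)
  qed auto
  finally show ?thesis by simp
qed

lemma bd0: "bR 1 * dR 0 = 1 - kR 0"
proof -
  have "D 1 0 * S 0 0 = 1" "D 1 1 * S 0 0 = 1" "D 1 1 * S 0 1 = 1"
    using R2b[of 0 0 0] R2b[of 1 0 0] R2b[of 1 1 0] by simp_all
  then show ?thesis
    unfolding bR_def dR_def kR_def tR_def
    by (simp add: atMost_Suc sg_Suc ring_distribs)
qed

lemma bd: assumes n: "1 \<le> n" shows "bR (n+1) * dR n + dR (n-1) * bR n = 1 - kR n"
proof -
  define f where "f = (\<lambda>p. sg (fst p + snd p) * (D (n+1) (fst p) * S n (snd p)))"
  define g where "g = (\<lambda>p. sg (fst p + snd p) * (S (n-1) (fst p) * D n (snd p)))"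
  define F where "F = case_sum f g"
  define P where "P = {..n+1} \<times> {..n+1}"
  define Q where "Q = {..n-1+1} \<times> {..n}"
  have "bR (n+1) * dR n = sum f P"
    unfolding bR_def dR_def f_def P_def by (rule prod_sums)
  moreover have "dR (n-1) * bR n = sum g Q"
    unfolding bR_def dR_def g_def Q_def by (rule prod_sums)
  moreover have "sum F (P <+> Q) = sum f P + sum g Q"
    unfolding P_def Q_def F_def by (subst sum.Plus) (auto simp: comp_def)
  moreover have "sum F (P <+> Q) = sum F {Inl (n+1, n+1), Inl (0, n+1), Inr (n-1+1, 0)}"
  proof (rule sum_cancel[where B = "Inl ` {p \<in> P. (fst p < snd p \<and> \<not> (fst p = 0 \<and> snd p = n + 1)) \<or> snd p + 1 < fst p \<or> (fst p = snd p \<and> snd p \<le> n)}"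
      and \<phi> = "case_sum (\<lambda>(i,j). if i < j then Inr (j - 1, i) else if j + 1 < i then Inr (j, i - 1) else Inl (i + 1, j)) (\<lambda>_. undefined)"
      and \<psi> = "case_sum (\<lambda>(i,j). Inl (j, j)) (\<lambda>(j,i). if i \<le> j then Inl (i, j + 1) else Inl (i + 1, j))"])
    show "finite (P <+> Q)" unfolding P_def Q_def by simp
    show "{Inl (n + 1, n + 1), Inl (0, n + 1), Inr (n - 1 + 1, 0)} \<subseteq> P <+> Q"
      unfolding P_def Q_def by auto
  next
    fix a :: "(nat \<times> nat) + (nat \<times> nat)"
    assume "a \<in> Inl ` {p \<in> P. (fst p < snd p \<and> \<not> (fst p = 0 \<and> snd p = n + 1)) \<or> snd p + 1 < fst p \<or> (fst p = snd p \<and> snd p \<le> n)}"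
    then obtain i j where a: "a = Inl (i, j)" "i \<le> n + 1" "j \<le> n + 1"
      and c: "(i < j \<and> \<not> (i = 0 \<and> j = n + 1)) \<or> j + 1 < i \<or> (i = j \<and> j \<le> n)"
      unfolding P_def by auto
    show "F (case_sum (\<lambda>(i,j). if i < j then Inr (j - 1, i) else if j + 1 < i then Inr (j, i - 1) else Inl (i + 1, j)) (\<lambda>_. undefined) a) = - F a"
    proof -
      consider "i < j" "\<not> (i = 0 \<and> j = n + 1)" | "j + 1 < i" | "i = j" "j \<le> n" using c by auto
      then show ?thesis
      proof cases
        case 1
        then obtain j' where j': "j = Suc j'" by (cases j) auto
        show ?thesis using 1 a j' R2a[OF n 1(1) a(3) 1(2)]
          by (simp add: F_def f_def g_def sg_Suc add.commute)
      next
        case 2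
        then obtain i' where i': "i = Suc i'" by (cases i) auto
        show ?thesis using 2 a i' R2c[OF n 2 a(2)]
          by (simp add: F_def f_def g_def sg_Suc add.commute)
      next
        case 3
        show ?thesis using 3 a R2b[of i j n] R2b[of "i+1" j n]
          by (simp add: F_def f_def g_def sg_Suc)
      qed
    qed
  qed (use n in \<open>auto simp: P_def Q_def split: if_splits\<close>)
  moreover have "sum F {Inl (n+1, n+1), Inl (0, n+1), Inr (n-1+1, 0)} = 1 - kR n"
  proof -
    have "F (Inl (n+1, n+1)) = 1" using R2b[of "n+1" "n+1" n]
      by (simp add: F_def f_def sg_def)
    moreover have "F (Inl (0, n+1)) = - (sg n * tR n)"
      by (simp add: F_def f_def tR_def sg_Suc)
    moreover have "F (Inr (n-1+1, 0)) = sg n * (S (n-1) n * D n 0)"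
      using n by (simp add: F_def g_def)
    ultimately show ?thesis
      using n by (simp add: kR_def algebra_simps)
  qed
  ultimately show ?thesis using n by simp
qed

lemma mrw: "a * b = c * d \<Longrightarrow> a * (b * z) = c * (d * (z::R))"
  by (metis mult.assoc)

lemma kR_Suc: "kR (Suc n) = sg (Suc n) * (D (n+2) 0 * S (n+1) (n+2) - S n (n+1) * D (n+1) 0)"
  by (simp add: kR_def tR_def)

lemma sg_left: "x * (sg i * y) = sg i * (x * y)"
  by (metis mult.assoc sg_comm)

lemma F0: "D (n+1) 0 * kR (n+1) = kR n * (D (n+1) 0 - D (n+1) 1)"
proof -
  have a: "D (n+1) 0 * (D (n+2) 0 * S (n+1) (n+2)) = tR n * D (n+1) 1"
  proof -
    have "D (n+1) 0 * D (n+2) 0 = D (n+1) 0 * D (n+2) 1"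
      using R1[of "n+1" 0 1] by simp
    then have "D (n+1) 0 * (D (n+2) 0 * S (n+1) (n+2)) = D (n+1) 0 * (D (n+2) 1 * S (n+1) (n+2))"
      by (rule mrw)
    also have "D (n+2) 1 * S (n+1) (n+2) = S n (n+1) * D (n+1) 1"
      using R2a[of "n+1" 1 "n+2"] by simp
    finally show ?thesis by (simp add: tR_def mult.assoc)
  qed
  have b: "D (n+1) 0 * (S n (n+1) * D (n+1) 0) = tR n * D (n+1) 0"
    by (simp add: tR_def mult.assoc)
  have L: "D (n+1) 0 * kR (n+1) = sg (Suc n) * (tR n * D (n+1) 1 - tR n * D (n+1) 0)"
    using a b by (simp add: kR_Suc sg_left right_diff_distrib)
  show ?thesis
  proof (cases n)
    case 0
    then show ?thesis using L by (simp add: kR_def sg_Suc right_diff_distrib)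
  next
    case (Suc m)
    have c: "D n 0 * D (n+1) 1 = D n 0 * D (n+1) 0" using R1[of n 0 1] Suc by simp
    have e1: "kR n * (D (n+1) 0 - D (n+1) 1) = sg n * (tR n * D (n+1) 0 - tR n * D (n+1) 1)"
      using Suc c by (simp add: kR_def algebra_simps)
    have e2: "D (n+1) 0 * kR (n+1) = sg n * (tR n * D (n+1) 0 - tR n * D (n+1) 1)"
      using L by (simp add: sg_Suc algebra_simps)
    show ?thesis using e1 e2 by simp
  qed
qed

lemma Fi: assumes i: "1 \<le> i" "i \<le> n"
  shows "D (n+1) i * kR (n+1) = - (kR n * D (n+1) (i+1))"
proof -
  have n: "1 \<le> n" using i by simp
  have a: "D (n+1) i * (D (n+2) 0 * S (n+1) (n+2)) = tR n * D (n+1) (i+1)"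
  proof -
    have "D (n+1) i * D (n+2) 0 = D (n+1) 0 * D (n+2) (i+1)"
      using R1[of "n+1" 0 "i+1"] i by simp
    then have "D (n+1) i * (D (n+2) 0 * S (n+1) (n+2)) = D (n+1) 0 * (D (n+2) (i+1) * S (n+1) (n+2))"
      by (rule mrw)
    also have "D (n+2) (i+1) * S (n+1) (n+2) = S n (n+1) * D (n+1) (i+1)"
      using R2a[of "n+1" "i+1" "n+2"] i by simp
    finally show ?thesis by (simp add: tR_def mult.assoc)
  qed
  have b: "D (n+1) i * (S n (n+1) * D (n+1) 0) = S (n-1) n * (D n 0 * D (n+1) (i+1))"
  proof -
    have "D (n+1) i * S n (n+1) = S (n-1) n * D n i"
      using R2a[OF n, of i "n+1"] i by simp
    then have "D (n+1) i * (S n (n+1) * D (n+1) 0) = S (n-1) n * (D n i * D (n+1) 0)"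
      by (rule mrw)
    also have "D n i * D (n+1) 0 = D n 0 * D (n+1) (i+1)"
      using R1[OF n, of 0 "i+1"] i by simp
    finally show ?thesis .
  qed
  have "D (n+1) i * kR (n+1) = sg (Suc n) * (tR n * D (n+1) (i+1) - S (n-1) n * (D n 0 * D (n+1) (i+1)))"
    using a b by (simp add: kR_Suc sg_left right_diff_distrib)
  then show ?thesis using n by (simp add: kR_def sg_Suc algebra_simps)
qed

lemma Ftop: "D (n+1) (n+1) * kR (n+1) = 0"
proof -
  have a: "D (n+1) (n+1) * (D (n+2) 0 * S (n+1) (n+2)) = D (n+1) 0"
  proof -
    have "D (n+1) (n+1) * D (n+2) 0 = D (n+1) 0 * D (n+2) (n+2)"
      using R1[of "n+1" 0 "n+2"] by simp
    then have "D (n+1) (n+1) * (D (n+2) 0 * S (n+1) (n+2)) = D (n+1) 0 * (D (n+2) (n+2) * S (n+1) (n+2))"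
      by (rule mrw)
    also have "D (n+2) (n+2) * S (n+1) (n+2) = 1"
      using R2b[of "n+2" "n+2" "n+1"] by simp
    finally show ?thesis by simp
  qed
  have b: "D (n+1) (n+1) * (S n (n+1) * D (n+1) 0) = D (n+1) 0"
    using R2b[of "n+1" "n+1" n] by (simp flip: mult.assoc)
  show ?thesis
    using a b by (simp add: kR_Suc sg_left right_diff_distrib)
qed

lemma G0: "kR (m+1) * S m 0 = 0"
proof -
  have a: "D (m+2) 0 * S (m+1) (m+2) * S m 0 = S m (m+1)"
  proof -
    have "S (m+1) (m+2) * S m 0 = S (m+1) 0 * S m (m+1)"
      using R3[of 0 "m+1" m] by simp
    then have "D (m+2) 0 * (S (m+1) (m+2) * S m 0) = D (m+2) 0 * (S (m+1) 0 * S m (m+1))" by simp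
    also have "\<dots> = S m (m+1)" using R2b[of 0 0 "m+1"] by (simp flip: mult.assoc)
    finally show ?thesis by (simp add: mult.assoc)
  qed
  have b: "S m (m+1) * D (m+1) 0 * S m 0 = S m (m+1)"
    using R2b[of 0 0 m] by (simp add: mult.assoc)
  show ?thesis using a b by (simp add: kR_Suc mult.assoc left_diff_distrib)
qed

lemma Gj: assumes j: "1 \<le> j" "j \<le> m"
  shows "kR (m+1) * S m j = - (S m (j-1) * kR m)"
proof -
  have m: "1 \<le> m" using j by simp
  have a: "D (m+2) 0 * S (m+1) (m+2) * S m j = S m (j-1) * tR m"
  proof -
    have "S (m+1) (m+2) * S m j = S (m+1) j * S m (m+1)"
      using R3[of j "m+1" m] j by simp
    then have "D (m+2) 0 * (S (m+1) (m+2) * S m j) = D (m+2) 0 * (S (m+1) j * S m (m+1))" by simp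
    also have "D (m+2) 0 * (S (m+1) j * S m (m+1)) = S m (j-1) * (D (m+1) 0 * S m (m+1))"
      by (rule mrw) (use R2a[of "m+1" 0 j] j in simp)
    finally show ?thesis by (simp add: mult.assoc tR_def)
  qed
  have b: "S m (m+1) * D (m+1) 0 * S m j = S m (j-1) * (S (m-1) m * D m 0)"
  proof -
    have "D (m+1) 0 * S m j = S (m-1) (j-1) * D m 0"
      using R2a[OF m, of 0 j] j by simp
    then have "S m (m+1) * (D (m+1) 0 * S m j) = S m (m+1) * (S (m-1) (j-1) * D m 0)" by simp
    also have "\<dots> = S m (j-1) * (S (m-1) m * D m 0)"
      by (rule mrw) (use R3[of "j-1" m "m-1"] j m in simp)
    finally show ?thesis by (simp add: mult.assoc)
  qed
  have "kR (m+1) * S m j = sg (Suc m) * (S m (j-1) * tR m - S m (j-1) * (S (m-1) m * D m 0))"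
    using a b by (simp add: kR_Suc mult.assoc left_diff_distrib)
  then show ?thesis using m by (simp add: kR_def sg_Suc algebra_simps sg_left)
qed

lemma kd: "kR (n+1) * dR n = dR n * kR n"
proof -
  have b1: "bR (n+2) * dR (n+1) + dR n * bR (n+1) = 1 - kR (n+1)"
    using bd[of "n+1"] by simp
  have z: "bR (n+2) * (dR (n+1) * dR n) = 0" using dd[of n] by simp
  have "(1 - kR (n+1)) * dR n = bR (n+2) * dR (n+1) * dR n + dR n * bR (n+1) * dR n"
    by (simp only: b1 [symmetric] distrib_right)
  also have "\<dots> = dR n * bR (n+1) * dR n"
    using z by (simp only: mult.assoc) simp
  finally have l: "(1 - kR (n+1)) * dR n = dR n * bR (n+1) * dR n" .
  have r: "dR n * (1 - kR n) = dR n * bR (n+1) * dR n"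
  proof (cases n)
    case 0 then show ?thesis using bd0 by (simp only: mult.assoc) simp
  next
    case (Suc m)
    have e: "bR (n+1) * dR n + dR m * bR n = 1 - kR n" using bd[of n] Suc by simp
    have z2: "dR n * (dR m * bR n) = 0" using dd[of m] Suc by (simp flip: mult.assoc)
    have "dR n * (1 - kR n) = dR n * (bR (n+1) * dR n) + dR n * (dR m * bR n)"
      by (simp only: e [symmetric] distrib_left)
    then show ?thesis using z2 by (simp only: mult.assoc) simp
  qed
  have "kR (n+1) * dR n = dR n - (1 - kR (n+1)) * dR n" by (simp add: left_diff_distrib)
  also have "\<dots> = dR n - dR n * (1 - kR n)" using l r by simp
  also have "\<dots> = dR n * kR n" by (simp add: right_diff_distrib)
  finally show ?thesis .
qed

lemma kb: assumes n: "1 \<le> n" shows "bR n * kR n = kR (n-1) * bR n"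
proof -
  have l: "bR n * (1 - kR n) = bR n * dR (n-1) * bR n"
  proof -
    have z: "bR n * (bR (n+1) * dR n) = 0" using bb[OF n] by (simp flip: mult.assoc)
    have "bR n * (1 - kR n) = bR n * (bR (n+1) * dR n) + bR n * (dR (n-1) * bR n)"
      by (simp only: bd[OF n, symmetric] distrib_left)
    then show ?thesis using z by (simp only: mult.assoc) simp
  qed
  have r: "(1 - kR (n-1)) * bR n = bR n * dR (n-1) * bR n"
  proof (cases "n = 1")
    case True then show ?thesis using bd0 by simp
  next
    case False
    then have n2: "1 \<le> n - 1" using n by simp
    have e: "bR n * dR (n-1) + dR (n-1-1) * bR (n-1) = 1 - kR (n-1)" using bd[OF n2] n by simp
    have z: "dR (n-1-1) * (bR (n-1) * bR n) = 0" using bb[OF n2] n by simp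
    have "(1 - kR (n-1)) * bR n = bR n * dR (n-1) * bR n + dR (n-1-1) * bR (n-1) * bR n"
      by (simp only: e [symmetric] distrib_right)
    then show ?thesis using z by (simp only: mult.assoc) simp
  qed
  have "bR n * kR n = bR n - bR n * (1 - kR n)" by (simp add: right_diff_distrib)
  also have "\<dots> = bR n - (1 - kR (n-1)) * bR n" using l r by simp
  also have "\<dots> = kR (n-1) * bR n" by (simp add: left_diff_distrib)
  finally show ?thesis .
qed

lemma kd_pow: "kR (n+1) ^ k * dR n = dR n * kR n ^ k"
proof (induction k)
  case 0 then show ?case by simp
next
  case (Suc k)
  have "kR (n+1) ^ Suc k * dR n = kR (n+1) * (kR (n+1) ^ k * dR n)" by (simp add: mult.assoc)
  also have "\<dots> = (kR (n+1) * dR n) * kR n ^ k" using Suc by (simp add: mult.assoc)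
  also have "\<dots> = dR n * kR n ^ Suc k" using kd[of n] by (simp add: mult.assoc)
  finally show ?case .
qed

lemma kb_pow: assumes "1 \<le> n" shows "bR n * kR n ^ k = kR (n-1) ^ k * bR n"
proof (induction k)
  case 0 then show ?case by simp
next
  case (Suc k)
  have "bR n * kR n ^ Suc k = bR n * kR n ^ k * kR n" by (simp only: mult.assoc power_Suc2)
  also have "\<dots> = kR (n-1) ^ k * (bR n * kR n)" using Suc by (simp add: mult.assoc)
  also have "\<dots> = kR (n-1) ^ Suc k * bR n" by (simp only: kb[OF assms] mult.assoc power_Suc2)
  finally show ?case .
qed

lemma dR_split: "dR n = d'R n + sg (n+1) * S n (n+1)"
  unfolding dR_def d'R_def by simp

lemma bsig: assumes n: "1 \<le> n"
  shows "bR (n+1) * S n (n+1) - S (n-1) n * bR n = tR n + sg (n+1) - S (n-1) n * D n 0"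
proof -
  obtain m where m: "n = Suc m" using n by (cases n) auto
  define f where "f = (\<lambda>i. sg i * (D (n+1) i * S n (n+1)))"
  define g where "g = (\<lambda>i. sg i * (S (n-1) n * D n i))"
  have fg: "f (Suc i) = g (Suc i)" if "i \<le> m" for i
    using R2a[OF n, of "Suc i" "n+1"] that m by (simp add: f_def g_def)
  have "bR (n+1) * S n (n+1) = (\<Sum>i\<le>n+1. f i)"
    unfolding bR_def f_def by (simp only: sum_distrib_right mult.assoc)
  also have "\<dots> = (\<Sum>i\<le>Suc (Suc m). f i)" using m by simp
  also have "\<dots> = f 0 + (\<Sum>i\<le>m. f (Suc i)) + f (Suc (Suc m))"
    by (subst sum.atMost_Suc_shift, subst sum.atMost_Suc, simp only: add.assoc)
  finally have L: "bR (n+1) * S n (n+1) = f 0 + (\<Sum>i\<le>m. g (Suc i)) + f (Suc (Suc m))"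
    using fg by simp
  have "S (n-1) n * bR n = (\<Sum>i\<le>n. g i)"
    unfolding bR_def g_def by (simp only: sum_distrib_left sg_left)
  also have "\<dots> = (\<Sum>i\<le>Suc m. g i)" using m by simp
  also have "\<dots> = g 0 + (\<Sum>i\<le>m. g (Suc i))"
    by (simp only: sum.atMost_Suc_shift)
  finally have R: "S (n-1) n * bR n = g 0 + (\<Sum>i\<le>m. g (Suc i))" .
  have ftop: "f (Suc (Suc m)) = sg (n+1)"
    using R2b[of "n+1" "n+1" n] m by (simp add: f_def)
  show ?thesis using L R ftop by (simp add: f_def g_def tR_def)
qed

lemma H: assumes n: "1 \<le> n" shows "bR (n+1) * d'R n + d'R (n-1) * bR n = 0"
proof -
  have d1: "d'R n = dR n - sg (n+1) * S n (n+1)" using dR_split[of n] by simp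
  have d2: "d'R (n-1) = dR (n-1) - sg n * S (n-1) n" using dR_split[of "n-1"] n by simp
  have "bR (n+1) * d'R n + d'R (n-1) * bR n
      = (bR (n+1) * dR n + dR (n-1) * bR n) - sg (n+1) * (bR (n+1) * S n (n+1)) - sg n * (S (n-1) n * bR n)"
    unfolding d1 d2 by (simp add: algebra_simps sg_left)
  also have "\<dots> = 1 - kR n - sg (n+1) * (bR (n+1) * S n (n+1) - S (n-1) n * bR n)"
    using bd[OF n] by (simp add: sg_Suc algebra_simps)
  also have "\<dots> = 1 - kR n - sg (n+1) * (tR n + sg (n+1) - S (n-1) n * D n 0)"
    using bsig[OF n] by simp
  also have "\<dots> = 0"
    using n by (simp add: kR_def sg_Suc algebra_simps sg_sq)
  finally show ?thesis .
qed

lemma Q: "k \<le> n \<Longrightarrow> (\<Sum>i\<le>k. sg i * D (n+1) i) * kR (n+1) = kR n * (\<Sum>i\<le>k+1. sg i * D (n+1) i)"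
proof (induction k)
  case 0 then show ?case using F0[of n] by (simp add: sg_Suc)
next
  case (Suc k)
  have i: "D (n+1) (Suc k) * kR (n+1) = - (kR n * D (n+1) (Suc k + 1))"
    using Fi[of "Suc k" n] Suc.prems by simp
  have "(\<Sum>i\<le>Suc k. sg i * D (n+1) i) * kR (n+1)
      = (\<Sum>i\<le>k. sg i * D (n+1) i) * kR (n+1) + sg (Suc k) * (D (n+1) (Suc k) * kR (n+1))"
    by (simp add: distrib_right mult.assoc)
  also have "\<dots> = kR n * (\<Sum>i\<le>k+1. sg i * D (n+1) i) - sg (Suc k) * (kR n * D (n+1) (Suc k + 1))"
    using Suc i by simp
  also have "\<dots> = kR n * (\<Sum>i\<le>Suc k + 1. sg i * D (n+1) i)"
    by (simp add: distrib_left sg_left sg_Suc)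
  finally show ?case .
qed

lemma Ppow: "k \<le> n \<Longrightarrow> D (n+1) 0 * kR (n+1) ^ k = kR n ^ k * (\<Sum>i\<le>k. sg i * D (n+1) i)"
proof (induction k)
  case 0 then show ?case by simp
next
  case (Suc k)
  have "D (n+1) 0 * kR (n+1) ^ Suc k = (D (n+1) 0 * kR (n+1) ^ k) * kR (n+1)"
    by (simp only: power_Suc2 mult.assoc)
  also have "\<dots> = kR n ^ k * ((\<Sum>i\<le>k. sg i * D (n+1) i) * kR (n+1))"
    using Suc by (simp add: mult.assoc)
  also have "\<dots> = kR n ^ Suc k * (\<Sum>i\<le>Suc k. sg i * D (n+1) i)"
    using Q[of k n] Suc.prems by (simp only: power_Suc2 mult.assoc) simp
  finally show ?case .
qed

lemma Gpow: "j \<le> m \<Longrightarrow> kR (m+1) ^ (j+1) * S m j = 0"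
proof (induction j)
  case 0 then show ?case using G0[of m] by simp
next
  case (Suc j)
  have "kR (m+1) ^ (Suc j + 1) * S m (Suc j) = kR (m+1) ^ (j+1) * (kR (m+1) * S m (Suc j))"
    by (simp only: power_Suc2 mult.assoc add_Suc)
  also have "\<dots> = - (kR (m+1) ^ (j+1) * S m j * kR m)"
    using Gj[of "Suc j" m] Suc.prems by (simp add: mult.assoc)
  also have "\<dots> = 0" using Suc by simp
  finally show ?case .
qed

lemma kd'0: assumes n: "1 \<le> n" shows "kR n ^ n * d'R (n-1) = 0"
proof -
  obtain m where m: "n = Suc m" using n by (cases n) auto
  have z: "kR (m+1) ^ (m+1) * S m j = 0" if "j \<le> m" for j
  proof -
    have e: "m + 1 = (m - j) + (j + 1)" using that by simp
    have "kR (m+1) ^ (m+1) = kR (m+1) ^ (m - j) * kR (m+1) ^ (j+1)"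
      by (subst e) (rule power_add)
    then show ?thesis using Gpow[OF that] by (simp add: mult.assoc)
  qed
  have "kR n ^ n * d'R (n-1) = (\<Sum>j\<le>m. sg j * (kR (m+1) ^ (m+1) * S m j))"
    unfolding d'R_def m by (simp add: sum_distrib_left sg_left)
  also have "\<dots> = 0" using z by simp
  finally show ?thesis .
qed

definition BR :: "nat \<Rightarrow> R" where "BR n = (\<Sum>i\<le>n. dR n * kR n ^ i)"
definition piR :: "nat \<Rightarrow> R" where "piR n = sg n * (D (n+1) 0 * (kR (n+1) ^ n * S n (n+1)))"

lemma pi_formula: assumes n: "1 \<le> n" shows "piR n = kR n ^ n - bR (n+1) * dR n * kR n ^ n"
proof -
  have s: "(\<Sum>i\<le>n. sg i * D (n+1) i) = bR (n+1) - sg (n+1) * D (n+1) (n+1)"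
    unfolding bR_def by simp
  have top: "D (n+1) (n+1) * S n (n+1) = 1" using R2b[of "n+1" "n+1" n] by simp
  have sgs: "sg n * sg (n+1) = - 1" by (simp add: sg_Suc sg_sq)
  have "piR n = sg n * (kR n ^ n * (\<Sum>i\<le>n. sg i * D (n+1) i) * S n (n+1))"
    unfolding piR_def by (simp only: mult.assoc[symmetric] Ppow[OF order_refl])
  also have "\<dots> = sg n * (kR n ^ n * (bR (n+1) * S n (n+1)) - sg (n+1) * (kR n ^ n * (D (n+1) (n+1) * S n (n+1))))"
    by (simp only: s left_diff_distrib right_diff_distrib mult.assoc sg_left[of "kR n ^ n"])
  also have "\<dots> = sg n * (kR n ^ n * (bR (n+1) * S n (n+1))) - (sg n * sg (n+1)) * kR n ^ n"
    by (simp only: top mult_1_right right_diff_distrib mult.assoc)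
  also have "\<dots> = sg n * (kR n ^ n * (bR (n+1) * S n (n+1))) + kR n ^ n"
    by (simp only: sgs) simp
  finally have p: "piR n = sg n * (kR n ^ n * (bR (n+1) * S n (n+1))) + kR n ^ n" .
  have kbp: "bR (n+1) * kR (n+1) ^ n = kR n ^ n * bR (n+1)" using kb_pow[of "n+1" n] by simp
  have z0: "bR (n+1) * d'R n = - (d'R (n-1) * bR n)" using H[OF n] by (simp add: eq_neg_iff_add_eq_0)
  have z: "kR n ^ n * (bR (n+1) * d'R n) = 0"
    by (simp only: z0 mult_minus_right mult.assoc[symmetric] kd'0[OF n]) simp
  have "bR (n+1) * dR n * kR n ^ n = bR (n+1) * (kR (n+1) ^ n * dR n)"
    by (simp only: mult.assoc kd_pow)
  also have "\<dots> = kR n ^ n * bR (n+1) * dR n"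
    by (simp only: mult.assoc[symmetric] kbp)
  also have "\<dots> = kR n ^ n * (bR (n+1) * d'R n) + sg (n+1) * (kR n ^ n * (bR (n+1) * S n (n+1)))"
    by (simp only: dR_split distrib_left mult.assoc sg_left[of "kR n ^ n"] sg_left[of "bR (n+1)"])
  finally have b: "bR (n+1) * dR n * kR n ^ n = sg (n+1) * (kR n ^ n * (bR (n+1) * S n (n+1)))"
    using z by simp
  have gen: "\<And>X a. sg n * X + a = a - sg (n+1) * X" by (simp add: sg_Suc)
  show ?thesis by (simp only: p b gen)
qed

theorem T1: "bR (Suc n) * BR n + (if n = 0 then 0 else BR (n-1) * bR n) = 1 - piR n"
proof (cases n)
  case 0
  then show ?thesis using bd0 by (simp add: BR_def piR_def kR_def tR_def)
next
  case (Suc m)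
  have n: "1 \<le> n" using Suc by simp
  have A: "bR (Suc n) * BR n = (\<Sum>i\<le>m. bR (n+1) * dR n * kR n ^ i) + bR (n+1) * dR n * kR n ^ n"
    unfolding BR_def by (simp only: Suc sum.atMost_Suc distrib_left sum_distrib_left mult.assoc Suc_eq_plus1[symmetric])
  have B: "BR (n-1) * bR n = (\<Sum>i\<le>m. dR (n-1) * bR n * kR n ^ i)"
    unfolding BR_def using Suc kb_pow[OF n]
    by (simp add: sum_distrib_right mult.assoc)
  have "(\<Sum>i\<le>m. bR (n+1) * dR n * kR n ^ i) + (\<Sum>i\<le>m. dR (n-1) * bR n * kR n ^ i)
      = (\<Sum>i\<le>m. (1 - kR n) * kR n ^ i)"
    by (simp flip: sum.distrib distrib_right bd[OF n])
  also have "\<dots> = (\<Sum>i<Suc m. kR n ^ i - kR n ^ Suc i)"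
    by (simp add: lessThan_Suc_atMost left_diff_distrib)
  also have "\<dots> = kR n ^ 0 - kR n ^ Suc m"
    by (rule sum_lessThan_telescope')
  also have "\<dots> = 1 - kR n ^ n"
    using Suc by simp
  finally have C: "(\<Sum>i\<le>m. bR (n+1) * dR n * kR n ^ i) + (\<Sum>i\<le>m. dR (n-1) * bR n * kR n ^ i) = 1 - kR n ^ n" .
  have "bR (Suc n) * BR n + BR (n-1) * bR n
     = ((\<Sum>i\<le>m. bR (n+1) * dR n * kR n ^ i) + (\<Sum>i\<le>m. dR (n-1) * bR n * kR n ^ i)) + bR (n+1) * dR n * kR n ^ n"
    unfolding A B by (simp only: add_ac)
  also have "\<dots> = (1 - kR n ^ n) + bR (n+1) * dR n * kR n ^ n"
    by (simp only: C)
  also have "\<dots> = 1 - piR n"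
  proof -
    have gen: "\<And>a b::R. (1 - a) + b = 1 - (a - b)" by (simp add: algebra_simps)
    show ?thesis by (simp only: pi_formula[OF n] gen)
  qed
  finally have L: "bR (Suc n) * BR n + BR (n-1) * bR n = 1 - piR n" .
  have nz: "n \<noteq> 0" using n by simp
  show ?thesis using L by (simp only: nz if_False)
qed

theorem T2: "BR (Suc n) * BR n = 0"
proof -
  have z: "dR (n+1) * kR (n+1) ^ i * BR n = 0" for i
  proof -
    have "kR (n+1) ^ i * BR n = (\<Sum>j\<le>n. (kR (n+1) ^ i * dR n) * kR n ^ j)"
      unfolding BR_def by (simp add: sum_distrib_left mult.assoc)
    also have "\<dots> = (\<Sum>j\<le>n. dR n * (kR n ^ i * kR n ^ j))"
      by (simp only: kd_pow mult.assoc)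
    finally have "dR (n+1) * (kR (n+1) ^ i * BR n) = (\<Sum>j\<le>n. (dR (n+1) * dR n) * (kR n ^ i * kR n ^ j))"
      by (simp add: sum_distrib_left mult.assoc)
    moreover have "(\<Sum>j\<le>n. (dR (n+1) * dR n) * (kR n ^ i * kR n ^ j)) = 0" using dd[of n] by simp
    ultimately show ?thesis by (simp only: mult.assoc)
  qed
  show ?thesis unfolding BR_def[of "Suc n"] sum_distrib_right using z by (simp del: sum.atMost_Suc)
qed

definition G :: "('o, 'm) pacat \<Rightarrow> 'o \<Rightarrow> 'o \<Rightarrow> 'm monoid" where
  "G C a b = \<lparr>carrier = pa_hom C a b, mult = pa_add C, one = pa_zero C a b\<rparr>"

lemma G_simps [simp]: "carrier (G C a b) = pa_hom C a b" "mult (G C a b) = pa_add C" "one (G C a b) = pa_zero C a b"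
  by (simp_all add: G_def)

definition supp :: "nat \<Rightarrow> nat \<Rightarrow> R \<Rightarrow> bool" where
  "supp m n x = (Poly_Mapping.keys x \<subseteq> {g. Rep_lm g \<in> lam m n})"

locale dup =
  fixes C :: "('o, 'm) pacat" and Mo :: "nat \<Rightarrow> 'o" and Mf :: "nat \<Rightarrow> nat \<Rightarrow> (int \<Rightarrow> int) \<Rightarrow> 'm"
  assumes pa: "preadditive C" and du: "duplicial C Mo Mf"
begin

abbreviation "hom' a b \<equiv> pa_hom C a b"

lemmas PA = pa[unfolded preadditive_def]

lemma comp_closed: "f \<in> hom' a b \<Longrightarrow> g \<in> hom' b c \<Longrightarrow> pa_comp C g f \<in> hom' a c"
  by (simp add: PA)
lemma comp_assoc: "f \<in> hom' a b \<Longrightarrow> g \<in> hom' b c \<Longrightarrow> h \<in> hom' c d \<Longrightarrow>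
   pa_comp C h (pa_comp C g f) = pa_comp C (pa_comp C h g) f"
  by (simp add: PA)
lemma add_closed: "f \<in> hom' a b \<Longrightarrow> g \<in> hom' a b \<Longrightarrow> pa_add C f g \<in> hom' a b"
  by (simp add: PA)
lemma neg_closed: "f \<in> hom' a b \<Longrightarrow> pa_neg C f \<in> hom' a b"
  by (simp add: PA)
lemma zero_closed: "pa_zero C a b \<in> hom' a b"
  by (simp add: PA)
lemma id_closed: "pa_id C a \<in> hom' a a"
  by (simp add: PA)
lemma comp_distl: "f \<in> hom' a b \<Longrightarrow> g \<in> hom' b c \<Longrightarrow> g' \<in> hom' b c \<Longrightarrow>
   pa_comp C (pa_add C g g') f = pa_add C (pa_comp C g f) (pa_comp C g' f)"
  by (simp add: PA)
lemma comp_distr: "f \<in> hom' a b \<Longrightarrow> f' \<in> hom' a b \<Longrightarrow> g \<in> hom' b c \<Longrightarrow>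
   pa_comp C g (pa_add C f f') = pa_add C (pa_comp C g f) (pa_comp C g f')"
  by (simp add: PA)

lemma grp: "comm_group (G C a b)"
proof (rule comm_groupI)
  fix x assume "x \<in> carrier (G C a b)"
  then show "\<exists>y\<in>carrier (G C a b). y \<otimes>\<^bsub>G C a b\<^esub> x = \<one>\<^bsub>G C a b\<^esub>"
    by (auto simp: PA intro!: bexI[of _ "pa_neg C x"])
qed (auto simp: PA)

lemma inv_G: "f \<in> hom' a b \<Longrightarrow> inv\<^bsub>G C a b\<^esub> f = pa_neg C f"
proof -
  assume f: "f \<in> hom' a b"
  interpret comm_group "G C a b" by (rule grp)
  show ?thesis
    by (rule inv_equality) (use f in \<open>auto simp: PA\<close>)
qed

lemma comp_hom_left: "g \<in> hom' b c \<Longrightarrow> (\<lambda>f. pa_comp C g f) \<in> hom (G C a b) (G C a c)"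
  unfolding hom_def using comp_closed comp_distr by auto

lemma comp_hom_right: "f \<in> hom' a b \<Longrightarrow> (\<lambda>g. pa_comp C g f) \<in> hom (G C b c) (G C a c)"
  unfolding hom_def using comp_closed comp_distl by auto

lemma gh_left: "g \<in> hom' b c \<Longrightarrow> group_hom (G C a b) (G C a c) (\<lambda>f. pa_comp C g f)"
  by (simp add: group_hom_def group_hom_axioms_def comp_hom_left grp comm_group.axioms(2))

lemma gh_right: "f \<in> hom' a b \<Longrightarrow> group_hom (G C b c) (G C a c) (\<lambda>g. pa_comp C g f)"
  by (simp add: group_hom_def group_hom_axioms_def comp_hom_right grp comm_group.axioms(2))

lemma comp_zero_r: "g \<in> hom' b c \<Longrightarrow> pa_comp C g (pa_zero C a b) = pa_zero C a c"
  using group_hom.hom_one[OF gh_left[of g b c a]] by simp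
lemma comp_zero_l: "f \<in> hom' a b \<Longrightarrow> pa_comp C (pa_zero C b c) f = pa_zero C a c"
  using group_hom.hom_one[OF gh_right[of f a b c]] by simp

lemma comp_inv_r: "g \<in> hom' b c \<Longrightarrow> f \<in> hom' a b \<Longrightarrow>
  pa_comp C g (inv\<^bsub>G C a b\<^esub> f) = inv\<^bsub>G C a c\<^esub> (pa_comp C g f)"
  using group_hom.hom_inv[OF gh_left[of g b c a], of f] by simp
lemma comp_inv_l: "g \<in> hom' b c \<Longrightarrow> f \<in> hom' a b \<Longrightarrow>
  pa_comp C (inv\<^bsub>G C b c\<^esub> g) f = inv\<^bsub>G C a c\<^esub> (pa_comp C g f)"
  using group_hom.hom_inv[OF gh_right[of f a b c], of g] by simp

lemma comp_pow_r: "g \<in> hom' b c \<Longrightarrow> f \<in> hom' a b \<Longrightarrow>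
  pa_comp C g (f [^]\<^bsub>G C a b\<^esub> (k::int)) = (pa_comp C g f) [^]\<^bsub>G C a c\<^esub> k"
  using group_hom.hom_int_pow[OF gh_left[of g b c a], of f k] by simp
lemma comp_pow_l: "g \<in> hom' b c \<Longrightarrow> f \<in> hom' a b \<Longrightarrow>
  pa_comp C (g [^]\<^bsub>G C b c\<^esub> (k::int)) f = (pa_comp C g f) [^]\<^bsub>G C a c\<^esub> k"
  using group_hom.hom_int_pow[OF gh_right[of f a b c], of g k] by simp


lemma Mf_closed: "f \<in> lam m n \<Longrightarrow> Mf m n f \<in> hom' (Mo n) (Mo m)"
  using du unfolding duplicial_def by blast
lemma Mf_id: "Mf m m id = pa_id C (Mo m)"
  using du unfolding duplicial_def by blast
lemma Mf_comp: "f \<in> lam l m \<Longrightarrow> g \<in> lam m n \<Longrightarrow> Mf l n (g \<circ> f) = pa_comp C (Mf l m f) (Mf m n g)"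
  using du unfolding duplicial_def by blast

lemma add_zero_r: "f \<in> hom' a b \<Longrightarrow> pa_add C f (pa_zero C a b) = f"
  using PA zero_closed by metis

definition trm :: "nat \<Rightarrow> nat \<Rightarrow> R \<Rightarrow> lm \<Rightarrow> 'm" where
  "trm m n x g = (if Rep_lm g \<in> lam m n then Mf m n (Rep_lm g) [^]\<^bsub>G C (Mo n) (Mo m)\<^esub> (Poly_Mapping.lookup x g)
     else pa_zero C (Mo n) (Mo m))"

definition phi :: "nat \<Rightarrow> nat \<Rightarrow> R \<Rightarrow> 'm" where
  "phi m n x = finprod (G C (Mo n) (Mo m)) (trm m n x) (Poly_Mapping.keys x)"

lemma trm_closed: "trm m n x g \<in> hom' (Mo n) (Mo m)"
proof -
  interpret comm_group "G C (Mo n) (Mo m)" by (rule grp)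
  show ?thesis
  proof (cases "Rep_lm g \<in> lam m n")
    case True
    then have "Mf m n (Rep_lm g) \<in> carrier (G C (Mo n) (Mo m))" using Mf_closed by simp
    then have "Mf m n (Rep_lm g) [^]\<^bsub>G C (Mo n) (Mo m)\<^esub> (Poly_Mapping.lookup x g) \<in> carrier (G C (Mo n) (Mo m))"
      by (rule int_pow_closed)
    then show ?thesis using True by (simp add: trm_def)
  next
    case False then show ?thesis by (simp add: trm_def zero_closed)
  qed
qed

lemma trm_Pi: "trm m n x \<in> A \<rightarrow> carrier (G C (Mo n) (Mo m))"
  using trm_closed by (simp add: Pi_def)

lemma trm_out: "g \<notin> Poly_Mapping.keys x \<Longrightarrow> trm m n x g = pa_zero C (Mo n) (Mo m)"
  by (simp add: trm_def in_keys_iff)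

lemma phi_sup: assumes "finite A" "Poly_Mapping.keys x \<subseteq> A"
  shows "phi m n x = finprod (G C (Mo n) (Mo m)) (trm m n x) A"
proof -
  interpret comm_group "G C (Mo n) (Mo m)" by (rule grp)
  show ?thesis unfolding phi_def
    apply (rule finprod_mono_neutral_cong_left[OF assms])
      apply (simp add: trm_out)
     apply (rule refl)
    apply (rule trm_Pi)
    done
qed

lemma trm_add: "trm m n (x + y) g = pa_add C (trm m n x g) (trm m n y g)"
proof -
  interpret comm_group "G C (Mo n) (Mo m)" by (rule grp)
  show ?thesis
  proof (cases "Rep_lm g \<in> lam m n")
    case True
    then have c: "Mf m n (Rep_lm g) \<in> carrier (G C (Mo n) (Mo m))" using Mf_closed by simp
    show ?thesis using True int_pow_mult[OF c, of "Poly_Mapping.lookup x g" "Poly_Mapping.lookup y g"]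
      by (simp add: trm_def lookup_add)
  next
    case False
    have "pa_zero C (Mo n) (Mo m) \<in> carrier (G C (Mo n) (Mo m))" using zero_closed by simp
    then show ?thesis using False l_one[of "pa_zero C (Mo n) (Mo m)"] by (simp add: trm_def)
  qed
qed

lemma phi_closed: "phi m n x \<in> hom' (Mo n) (Mo m)"
proof -
  interpret comm_group "G C (Mo n) (Mo m)" by (rule grp)
  show ?thesis unfolding phi_def using finprod_closed[OF trm_Pi] by simp
qed

lemma phi_zero: "phi m n 0 = pa_zero C (Mo n) (Mo m)"
proof -
  interpret comm_group "G C (Mo n) (Mo m)" by (rule grp)
  show ?thesis unfolding phi_def by simp
qed

lemma phi_add: "phi m n (x + y) = pa_add C (phi m n x) (phi m n y)"
proof -
  interpret comm_group "G C (Mo n) (Mo m)" by (rule grp)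
  let ?A = "Poly_Mapping.keys x \<union> Poly_Mapping.keys y"
  have fin: "finite ?A" by simp
  have "phi m n (x + y) = finprod (G C (Mo n) (Mo m)) (trm m n (x + y)) ?A"
    by (rule phi_sup[OF fin]) (rule keys_add)
  also have "\<dots> = finprod (G C (Mo n) (Mo m)) (\<lambda>g. trm m n x g \<otimes>\<^bsub>G C (Mo n) (Mo m)\<^esub> trm m n y g) ?A"
  proof -
    have "trm m n (x + y) = (\<lambda>g. trm m n x g \<otimes>\<^bsub>G C (Mo n) (Mo m)\<^esub> trm m n y g)"
      by (rule ext) (simp only: trm_add G_simps)
    then show ?thesis by (simp only:)
  qed
  also have "\<dots> = finprod (G C (Mo n) (Mo m)) (trm m n x) ?A \<otimes>\<^bsub>G C (Mo n) (Mo m)\<^esub> finprod (G C (Mo n) (Mo m)) (trm m n y) ?A"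
    by (rule finprod_multf[OF trm_Pi trm_Pi])
  also have "\<dots> = pa_add C (phi m n x) (phi m n y)"
    using phi_sup[OF fin, of x m n] phi_sup[OF fin, of y m n] by simp
  finally show ?thesis .
qed

lemma phi_neg: "phi m n (- x) = pa_neg C (phi m n x)"
proof -
  interpret comm_group "G C (Mo n) (Mo m)" by (rule grp)
  have "phi m n (- x + x) = pa_add C (phi m n (- x)) (phi m n x)" by (rule phi_add)
  then have e: "pa_add C (phi m n (- x)) (phi m n x) = pa_zero C (Mo n) (Mo m)"
    by (simp only: add.left_inverse phi_zero)
  have c1: "phi m n x \<in> carrier (G C (Mo n) (Mo m))" using phi_closed by simp
  have c2: "phi m n (- x) \<in> carrier (G C (Mo n) (Mo m))" using phi_closed by simp
  have "inv\<^bsub>G C (Mo n) (Mo m)\<^esub> (phi m n x) = phi m n (- x)"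
    using inv_equality[OF _ c1 c2] e by simp
  moreover have "inv\<^bsub>G C (Mo n) (Mo m)\<^esub> (phi m n x) = pa_neg C (phi m n x)"
    by (rule inv_G[OF phi_closed])
  ultimately show ?thesis by simp
qed

lemma phi_diff: "phi m n (x - y) = pa_add C (phi m n x) (pa_neg C (phi m n y))"
  by (simp only: diff_conv_add_uminus phi_add phi_neg)

lemma phi_E: "f \<in> lam m n \<Longrightarrow> phi m n (E f) = Mf m n f"
proof -
  assume f: "f \<in> lam m n"
  interpret comm_group "G C (Mo n) (Mo m)" by (rule grp)
  have k: "Poly_Mapping.keys (E f) = {Abs_lm f}" by (simp add: E_def)
  have "phi m n (E f) = trm m n (E f) (Abs_lm f)"
    unfolding phi_def k using trm_closed add_zero_r by simp
  also have "\<dots> = Mf m n f" using f Mf_closed[OF f] by (simp add: trm_def E_def Abs_lm_inverse)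
  finally show ?thesis .
qed

lemma phi_mult: assumes x: "supp l m x" and y: "supp m n y"
  shows "phi l n (x * y) = pa_comp C (phi l m x) (phi m n y)"
proof -
  have single: "phi l n (frag_of g * y) = pa_comp C (phi l m (frag_of g)) (phi m n y)"
    if g: "Rep_lm g \<in> lam l m" for g
  proof -
    have "Poly_Mapping.keys y \<subseteq> {h. Rep_lm h \<in> lam m n}" using y by (simp add: supp_def)
    then show ?thesis
    proof (induction y rule: frag_induction)
      case zero
      then show ?case using comp_zero_r[OF phi_closed] by (simp add: phi_zero)
    next
      case (one h)
      have e: "frag_of g = E (Rep_lm g)" "frag_of h = E (Rep_lm h)" by (simp_all add: E_def Rep_lm_inverse)
      have h: "Rep_lm h \<in> lam m n" using one by simp
      have hg: "Rep_lm h \<circ> Rep_lm g \<in> lam l n" by (rule lam_comp[OF g h])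
      have "phi l n (frag_of g * frag_of h) = phi l n (E (Rep_lm h \<circ> Rep_lm g))" by (simp only: e E_mult)
      also have "\<dots> = Mf l n (Rep_lm h \<circ> Rep_lm g)" by (rule phi_E[OF hg])
      also have "\<dots> = pa_comp C (Mf l m (Rep_lm g)) (Mf m n (Rep_lm h))" by (rule Mf_comp[OF g h])
      also have "\<dots> = pa_comp C (phi l m (frag_of g)) (phi m n (frag_of h))"
        by (simp only: e phi_E[OF g] phi_E[OF h])
      finally show ?case .
    next
      case (diff a b)
      have u: "phi l m (frag_of g) \<in> hom' (Mo m) (Mo l)" by (rule phi_closed)
      have "pa_comp C (phi l m (frag_of g)) (pa_neg C (phi m n b)) = pa_neg C (pa_comp C (phi l m (frag_of g)) (phi m n b))"
        using comp_inv_r[OF u phi_closed] inv_G phi_closed comp_closed[OF phi_closed u] by metis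
      then show ?case using diff
        by (simp add: right_diff_distrib phi_diff comp_distr[OF phi_closed neg_closed[OF phi_closed] u])
    qed
  qed
  have "Poly_Mapping.keys x \<subseteq> {g. Rep_lm g \<in> lam l m}" using x by (simp add: supp_def)
  then show ?thesis
  proof (induction x rule: frag_induction)
    case zero
    then show ?case using comp_zero_l[OF phi_closed] by (simp add: phi_zero)
  next
    case (one g)
    then show ?case using single by simp
  next
    case (diff a b)
    have v: "phi m n y \<in> hom' (Mo n) (Mo m)" by (rule phi_closed)
    have "pa_comp C (pa_neg C (phi l m b)) (phi m n y) = pa_neg C (pa_comp C (phi l m b) (phi m n y))"
      using comp_inv_l[OF phi_closed v] inv_G phi_closed comp_closed[OF v phi_closed] by metis
    then show ?case using diff
      by (simp add: left_diff_distrib phi_diff comp_distl[OF v phi_closed neg_closed[OF phi_closed]])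
  qed
qed

end

lemma supp_0: "supp m n 0" by (simp add: supp_def)
lemma supp_add: "supp m n x \<Longrightarrow> supp m n y \<Longrightarrow> supp m n (x + y)"
  unfolding supp_def using keys_add[of x y] by (meson le_sup_iff order_trans)
lemma supp_neg: "supp m n x \<Longrightarrow> supp m n (- x)"
  unfolding supp_def by (simp add: keys_minus)
lemma supp_diff: "supp m n x \<Longrightarrow> supp m n y \<Longrightarrow> supp m n (x - y)"
  by (simp only: diff_conv_add_uminus supp_add supp_neg)
lemma supp_E: "f \<in> lam m n \<Longrightarrow> supp m n (E f)"
  by (simp add: supp_def E_def Abs_lm_inverse)
lemma supp_1: "supp m m 1"
  using supp_E[OF id_lam] by (simp add: E_id)
lemma supp_mult: assumes "supp l m x" "supp m n y" shows "supp l n (x * y)"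
  unfolding supp_def
proof
  fix c assume "c \<in> Poly_Mapping.keys (x * y)"
  then obtain a b where ab: "c = a + b" "a \<in> Poly_Mapping.keys x" "b \<in> Poly_Mapping.keys y"
    using keys_mult[of x y] by blast
  have "Rep_lm a \<in> lam l m" "Rep_lm b \<in> lam m n" using assms ab by (auto simp: supp_def)
  then have "Rep_lm b \<circ> Rep_lm a \<in> lam l n" by (rule lam_comp)
  then show "c \<in> {g. Rep_lm g \<in> lam l n}" using ab by (simp add: plus_lm_def Abs_lm_inverse)
qed
lemma sg_mult_eq: "sg i * x = (if even i then x else - x)"
  by (induction i) (auto simp: sg_Suc)
lemma supp_sg: "supp m n x \<Longrightarrow> supp m n (sg i * x)"
  by (simp add: sg_mult_eq supp_neg)
lemma supp_sum: assumes "\<And>i. i \<in> I \<Longrightarrow> supp m n (X i)" shows "supp m n (sum X I)"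
proof -
  have "Poly_Mapping.keys (sum X I) \<subseteq> (\<Union>i\<in>I. Poly_Mapping.keys (X i))" by (rule keys_sum)
  also have "\<dots> \<subseteq> {g. Rep_lm g \<in> lam m n}" using assms by (auto simp: supp_def)
  finally show ?thesis by (simp add: supp_def)
qed
lemma supp_pow: "supp n n x \<Longrightarrow> supp n n (x ^ k)"
  by (induction k) (simp_all add: supp_1 supp_mult)

lemma supp_D: "i \<le> Suc n \<Longrightarrow> supp n (Suc n) (D (Suc n) i)"
  unfolding D_def using supp_E[OF eps_lam[of "Suc n" i]] by simp
lemma supp_S: "i \<le> Suc n \<Longrightarrow> supp (Suc n) n (S n i)"
  unfolding S_def using supp_E[OF eta_lam[of i n]] by simp
lemma supp_bR: "supp n (Suc n) (bR (Suc n))"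
  unfolding bR_def by (intro supp_sum supp_sg supp_D) auto
lemma supp_dR: "supp (Suc n) n (dR n)"
  unfolding dR_def by (intro supp_sum supp_sg supp_S) auto
lemma supp_tR: "supp n n (tR n)"
  unfolding tR_def Suc_eq_plus1[symmetric] by (rule supp_mult[OF supp_D supp_S]) simp_all
lemma supp_kR: "supp n n (kR n)"
proof (cases n)
  case 0 then show ?thesis by (simp add: kR_def supp_tR)
next
  case (Suc m)
  have "supp (Suc m) (Suc m) (S m (Suc m) * D (Suc m) 0)"
    by (rule supp_mult[OF supp_S supp_D]) simp_all
  then show ?thesis using Suc by (simp add: kR_def supp_sg supp_diff supp_tR)
qed
lemma supp_kpow: "supp n n (kR n ^ k)"
  by (rule supp_pow[OF supp_kR])
lemma supp_BR: "supp (Suc n) n (BR n)"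
  unfolding BR_def by (intro supp_sum supp_mult[OF supp_dR] supp_kpow)
lemma supp_kS: "supp (Suc n) n (kR (Suc n) ^ n * S n (Suc n))"
  by (rule supp_mult[OF supp_kpow supp_S]) simp
lemma supp_piR: "supp n n (piR n)"
proof -
  have "supp n n (D (Suc n) 0 * (kR (Suc n) ^ n * S n (Suc n)))"
    by (rule supp_mult[OF supp_D supp_kS]) simp
  then show ?thesis unfolding piR_def by (simp add: supp_sg)
qed

context dup
begin

lemma phi_sg: "phi m n (sg k * x) = sgnm C k (phi m n x)"
  by (simp add: sg_mult_eq sgnm_def phi_neg)

lemma ssum_cong: "(\<And>i. i \<le> k \<Longrightarrow> f i = g i) \<Longrightarrow> ssum C f k = ssum C g k"
  by (induction k) auto
lemma psum_cong: "(\<And>i. i \<le> k \<Longrightarrow> f i = g i) \<Longrightarrow> psum C f k = psum C g k"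
  by (induction k) auto

lemma phi_ssum: "phi m n (\<Sum>i\<le>k. sg i * X i) = ssum C (\<lambda>i. phi m n (X i)) k"
  by (induction k) (simp_all add: phi_add phi_sg)
lemma phi_psum: "phi m n (\<Sum>i\<le>k. X i) = psum C (\<lambda>i. phi m n (X i)) k"
  by (induction k) (simp_all add: phi_add)

lemma face_eq: "i \<le> Suc n \<Longrightarrow> face Mf (Suc n) i = phi n (Suc n) (D (Suc n) i)"
  unfolding face_def D_def using phi_E[OF eps_lam[of "Suc n" i]] by simp
lemma degen_eq: "i \<le> Suc n \<Longrightarrow> degen Mf n i = phi (Suc n) n (S n i)"
  unfolding degen_def S_def using phi_E[OF eta_lam[of i n]] by simp

lemma bop_eq: "bop C Mf (Suc n) = phi n (Suc n) (bR (Suc n))"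
  unfolding bop_def bR_def phi_ssum by (rule ssum_cong) (simp add: face_eq)
lemma dop_eq: "dop C Mf n = phi (Suc n) n (dR n)"
  unfolding dop_def dR_def phi_ssum by (rule ssum_cong) (simp add: degen_eq)

lemma id_eq: "pa_id C (Mo n) = phi n n 1"
  using phi_E[OF id_lam, of n] Mf_id by (simp add: E_id)

lemma tR_eq: "pa_comp C (face Mf (Suc n) 0) (degen Mf n (Suc n)) = phi n n (tR n)"
proof -
  have "pa_comp C (face Mf (Suc n) 0) (degen Mf n (Suc n)) = pa_comp C (phi n (Suc n) (D (Suc n) 0)) (phi (Suc n) n (S n (Suc n)))"
    by (simp add: face_eq degen_eq)
  also have "\<dots> = phi n n (D (Suc n) 0 * S n (Suc n))"
    by (rule phi_mult[symmetric, OF supp_D supp_S]) simp_all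
  finally show ?thesis by (simp add: tR_def)
qed

lemma kappa_eq: "kappa C Mf n = phi n n (kR n)"
proof (cases n)
  case 0
  then show ?thesis using tR_eq[of 0] by (simp add: kappa_def kR_def)
next
  case (Suc m)
  have u: "pa_comp C (degen Mf m (Suc m)) (face Mf (Suc m) 0) = phi (Suc m) (Suc m) (S m (Suc m) * D (Suc m) 0)"
  proof -
    have "pa_comp C (degen Mf m (Suc m)) (face Mf (Suc m) 0) = pa_comp C (phi (Suc m) m (S m (Suc m))) (phi m (Suc m) (D (Suc m) 0))"
      by (simp add: face_eq degen_eq)
    also have "\<dots> = phi (Suc m) (Suc m) (S m (Suc m) * D (Suc m) 0)"
      by (rule phi_mult[symmetric, OF supp_S supp_D]) simp_all
    finally show ?thesis .
  qed
  have t: "pa_comp C (face Mf (Suc n) 0) (degen Mf n (Suc n)) = phi n n (tR n)" by (rule tR_eq)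
  show ?thesis using Suc t u
    by (simp add: kappa_def kR_def phi_sg phi_diff)
qed

lemma kpow_eq: "kpow C Mo Mf n k = phi n n (kR n ^ k)"
proof (induction k)
  case 0 then show ?case using id_eq by simp
next
  case (Suc k)
  have "kpow C Mo Mf n (Suc k) = pa_comp C (phi n n (kR n)) (phi n n (kR n ^ k))"
    using Suc by (simp add: kappa_eq)
  also have "\<dots> = phi n n (kR n * kR n ^ k)"
    by (rule phi_mult[symmetric, OF supp_kR supp_kpow])
  finally show ?case by simp
qed

lemma connesB_eq: "connesB C Mo Mf n = phi (Suc n) n (BR n)"
  unfolding connesB_def BR_def phi_psum
proof (rule psum_cong)
  fix i
  show "pa_comp C (dop C Mf n) (kpow C Mo Mf n i) = phi (Suc n) n (dR n * kR n ^ i)"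
    unfolding dop_eq kpow_eq by (rule phi_mult[symmetric, OF supp_dR supp_kpow])
qed

lemma piop_eq: "piop C Mo Mf n = phi n n (piR n)"
proof -
  have a: "pa_comp C (kpow C Mo Mf (Suc n) n) (degen Mf n (Suc n)) = phi (Suc n) n (kR (Suc n) ^ n * S n (Suc n))"
    unfolding kpow_eq degen_eq[OF order_refl] by (rule phi_mult[symmetric, OF supp_kpow supp_S]) simp
  have "pa_comp C (face Mf (Suc n) 0) (pa_comp C (kpow C Mo Mf (Suc n) n) (degen Mf n (Suc n)))
      = pa_comp C (phi n (Suc n) (D (Suc n) 0)) (phi (Suc n) n (kR (Suc n) ^ n * S n (Suc n)))"
    by (simp only: a face_eq[of 0 n] zero_le)
  also have "\<dots> = phi n n (D (Suc n) 0 * (kR (Suc n) ^ n * S n (Suc n)))"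
    by (rule phi_mult[symmetric, OF supp_D supp_kS]) simp
  finally have e: "pa_comp C (face Mf (Suc n) 0) (pa_comp C (kpow C Mo Mf (Suc n) n) (degen Mf n (Suc n)))
      = phi n n (D (Suc n) 0 * (kR (Suc n) ^ n * S n (Suc n)))" .
  show ?thesis unfolding piop_def piR_def Suc_eq_plus1[symmetric] e by (simp only: phi_sg)
qed

end

theorem mainTheorem17:
  fixes C :: "('o, 'm) pacat"
    and Mo :: "nat \<Rightarrow> 'o"
    and Mf :: "nat \<Rightarrow> nat \<Rightarrow> (int \<Rightarrow> int) \<Rightarrow> 'm"
  assumes "preadditive C"
    and "duplicial C Mo Mf"
  shows "\<forall>n. pa_add C (pa_comp C (bop C Mf (Suc n)) (connesB C Mo Mf n))
                      (if n = 0 then pa_zero C (Mo 0) (Mo 0)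
                       else pa_comp C (connesB C Mo Mf (n - 1)) (bop C Mf n))
             = pa_add C (pa_id C (Mo n)) (pa_neg C (piop C Mo Mf n))
           \<and> pa_comp C (connesB C Mo Mf (Suc n)) (connesB C Mo Mf n) = pa_zero C (Mo n) (Mo (n + 2))"
proof
  fix n
  interpret dup C Mo Mf using assms by unfold_locales
  have p1: "pa_comp C (bop C Mf (Suc n)) (connesB C Mo Mf n) = phi n n (bR (Suc n) * BR n)"
    unfolding bop_eq connesB_eq by (rule phi_mult[symmetric, OF supp_bR supp_BR])
  have p2: "(if n = 0 then pa_zero C (Mo 0) (Mo 0) else pa_comp C (connesB C Mo Mf (n - 1)) (bop C Mf n))
      = phi n n (if n = 0 then 0 else BR (n-1) * bR n)"
  proof (cases n)
    case 0 then show ?thesis by (simp add: phi_zero)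
  next
    case (Suc m)
    have "pa_comp C (connesB C Mo Mf m) (bop C Mf (Suc m)) = phi (Suc m) (Suc m) (BR m * bR (Suc m))"
      unfolding bop_eq connesB_eq by (rule phi_mult[symmetric, OF supp_BR supp_bR])
    then show ?thesis using Suc by simp
  qed
  have lhs: "pa_add C (pa_comp C (bop C Mf (Suc n)) (connesB C Mo Mf n))
                      (if n = 0 then pa_zero C (Mo 0) (Mo 0)
                       else pa_comp C (connesB C Mo Mf (n - 1)) (bop C Mf n))
      = phi n n (bR (Suc n) * BR n + (if n = 0 then 0 else BR (n-1) * bR n))"
    by (simp only: p1 p2 phi_add)
  have rhs: "pa_add C (pa_id C (Mo n)) (pa_neg C (piop C Mo Mf n)) = phi n n (1 - piR n)"
    by (simp only: id_eq piop_eq phi_diff)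
  have second: "pa_comp C (connesB C Mo Mf (Suc n)) (connesB C Mo Mf n) = pa_zero C (Mo n) (Mo (n + 2))"
  proof -
    have "pa_comp C (connesB C Mo Mf (Suc n)) (connesB C Mo Mf n) = phi (Suc (Suc n)) n (BR (Suc n) * BR n)"
      unfolding connesB_eq by (rule phi_mult[symmetric, OF supp_BR supp_BR])
    also have "\<dots> = pa_zero C (Mo n) (Mo (n + 2))"
      by (simp only: T2 phi_zero) simp
    finally show ?thesis .
  qed
  have first: "pa_add C (pa_comp C (bop C Mf (Suc n)) (connesB C Mo Mf n))
                      (if n = 0 then pa_zero C (Mo 0) (Mo 0)
                       else pa_comp C (connesB C Mo Mf (n - 1)) (bop C Mf n))
             = pa_add C (pa_id C (Mo n)) (pa_neg C (piop C Mo Mf n))"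
    by (simp only: lhs rhs T1)
  show "pa_add C (pa_comp C (bop C Mf (Suc n)) (connesB C Mo Mf n))
                      (if n = 0 then pa_zero C (Mo 0) (Mo 0)
                       else pa_comp C (connesB C Mo Mf (n - 1)) (bop C Mf n))
             = pa_add C (pa_id C (Mo n)) (pa_neg C (piop C Mo Mf n))
           \<and> pa_comp C (connesB C Mo Mf (Suc n)) (connesB C Mo Mf n) = pa_zero C (Mo n) (Mo (n + 2))"
    using first second by (rule conjI)
qed

end
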